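(* Let $A$ be a finite set of alternatives with $|A|\ge 3$, let $N=\{1,\dots,n\}$ with $n\ge 2$, and let $\mathbb{D}$ be a minimally rich domain of linear orders over $A$ that is connected with two distinct neighbours. If $f:\mathbb{D}^n\to A$ is unanimous, tops-only and locally strategy-proof, then $f$ satisfies dictatorship.
   Context: A domain is a set $\mathbb{D}$ of linear orders (strict preferences) over $A$; a preference profile is $P=(P_1,\dots,P_n)\in\mathbb{D}^n$. For a linear order $P_i$, $r_k(P_i)$ is its $k$-th ranked alternative. $\mathbb{D}$ is minimally rich if every $a\in A$ is ranked first in some $P_i\in\mathbb{D}$. Two linear orders $P_i,P_i'$ are adjacent ($P_i\sim P_i'$) if $P_i'$ is obtained from $P_i$ by swapping two consecutively ranked alternatives and leaving all other ranks unchanged. A social choice function (scf) is a map $f:\mathbb{D}^n\to A$. It is unanimous if $f(P)=a$ whenever every voter ranks $a$ first. It is locally strategy-proof if there is no voter $i$, profile $P$, and $P_i'\in\mathbb{D}$ with $P_i'\sim P_i$ such that $f(P_i',P_{-i})\,P_i\,f(P_i,P_{-i})$. It is tops-only if $f(P)=f(P')$ whenever $r_1(P_i)=r_1(P_i')$ for all $i$. It satisfies dictatorship if there is a voter $i$ with $f(P)=r_1(P_i)$ for all $P\in\mathbb{D}^n$. A path in $\mathbb{D}$ is a sequence of distinct preferences in $\mathbb{D}$ in which consecutive ones are adjacent; $\mathbb{D}$ is connected if any two of its preferences are joined by a path in $\mathbb{D}$. For $\bar{\mathbb{D}}\subseteq\mathbb{D}$, a neighbour of $\bar{\mathbb{D}}$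 in $\mathbb{D}$ is a $P_i\in\mathbb{D}\setminus\bar{\mathbb{D}}$ adjacent to some element of $\bar{\mathbb{D}}$. Two preferences $P_i,P_i'\in\mathbb{D}$ are top-connected in $\mathbb{D}$ if there is a path from $P_i$ to $P_i'$ in $\mathbb{D}$ all of whose members have the same top-ranked alternative. The top-connected closure $\mathbb{D}^{TCC}(P_i)$ is the set of preferences in $\mathbb{D}$ top-connected to $P_i$, together with $P_i$. $\mathbb{D}$ is connected with two distinct neighbours if (1) $\mathbb{D}$ is connected, and (2) for every $P_i\in\mathbb{D}$ there exist two neighbours $P_i',P_i''$ of $\mathbb{D}^{TCC}(P_i)$ in $\mathbb{D}$ with $r_1(P_i')\ne r_1(P_i'')$. *)

theory Defs
  imports "HOL-Library.FuncSet"
begin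

text \<open>A linear order (strict preference) over A is represented by the list of the
elements of A from best to worst. r_k(L) is L ! (k-1); the top is hd L.\<close>

definition linord :: "'a set \<Rightarrow> 'a list \<Rightarrow> bool" where
  "linord A L \<longleftrightarrow> distinct L \<and> set L = A"

definition prefers :: "'a list \<Rightarrow> 'a \<Rightarrow> 'a \<Rightarrow> bool" where
  "prefers L x y \<longleftrightarrow> (\<exists>i j. i < j \<and> j < length L \<and> L ! i = x \<and> L ! j = y)"

definition top :: "'a list \<Rightarrow> 'a" where
  "top L = hd L"

text \<open>Adjacency: swap the alternatives ranked k+1 and k+2 (0-based k, k+1).\<close>
definition adjacent :: "'a list \<Rightarrow> 'a list \<Rightarrow> bool" where
  "adjacent L L' \<longleftrightarrow>
     (\<exists>k. Suc k < length L \<and> L' = L[k := L ! Suc k, Suc k := L ! k])"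

definition minimally_rich :: "'a set \<Rightarrow> 'a list set \<Rightarrow> bool" where
  "minimally_rich A D \<longleftrightarrow> (\<forall>a\<in>A. \<exists>L\<in>D. top L = a)"

definition is_path :: "'a list set \<Rightarrow> 'a list list \<Rightarrow> bool" where
  "is_path D ps \<longleftrightarrow> ps \<noteq> [] \<and> distinct ps \<and> set ps \<subseteq> D \<and>
     (\<forall>k. Suc k < length ps \<longrightarrow> adjacent (ps ! k) (ps ! Suc k))"

definition dom_connected :: "'a list set \<Rightarrow> bool" where
  "dom_connected D \<longleftrightarrow>
     (\<forall>L\<in>D. \<forall>L'\<in>D. \<exists>ps. is_path D ps \<and> hd ps = L \<and> last ps = L')"

definition top_connected :: "'a list set \<Rightarrow> 'a list \<Rightarrow> 'a list \<Rightarrow> bool" where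
  "top_connected D L L' \<longleftrightarrow> L \<in> D \<and> L' \<in> D \<and>
     (\<exists>ps. is_path D ps \<and> hd ps = L \<and> last ps = L' \<and> (\<forall>Q\<in>set ps. top Q = top L))"

definition TCC :: "'a list set \<Rightarrow> 'a list \<Rightarrow> 'a list set" where
  "TCC D L = {L' \<in> D. top_connected D L L'} \<union> {L}"

definition neighbour :: "'a list set \<Rightarrow> 'a list set \<Rightarrow> 'a list \<Rightarrow> bool" where
  "neighbour D S Q \<longleftrightarrow> Q \<in> D \<and> Q \<notin> S \<and> (\<exists>R\<in>S. adjacent R Q)"

definition connected_two_neighbours :: "'a list set \<Rightarrow> bool" where
  "connected_two_neighbours D \<longleftrightarrow> dom_connected D \<and>
     (\<forall>L\<in>D. \<exists>Q1 Q2. neighbour D (TCC D L) Q1 \<and> neighbour D (TCC D L) Q2 \<and> top Q1 \<noteq> top Q2)"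

text \<open>Profiles: voters are 0..n-1; a profile is an extensional function on {..<n}.\<close>
definition profiles :: "nat \<Rightarrow> 'a list set \<Rightarrow> (nat \<Rightarrow> 'a list) set" where
  "profiles n D = {..<n} \<rightarrow>\<^sub>E D"

definition unanimous :: "nat \<Rightarrow> 'a list set \<Rightarrow> ((nat \<Rightarrow> 'a list) \<Rightarrow> 'a) \<Rightarrow> bool" where
  "unanimous n D f \<longleftrightarrow>
     (\<forall>P\<in>profiles n D. \<forall>a. (\<forall>i<n. top (P i) = a) \<longrightarrow> f P = a)"

definition locally_sp :: "nat \<Rightarrow> 'a list set \<Rightarrow> ((nat \<Rightarrow> 'a list) \<Rightarrow> 'a) \<Rightarrow> bool" where
  "locally_sp n D f \<longleftrightarrow>
     (\<forall>P\<in>profiles n D. \<forall>i<n. \<forall>Q\<in>D. adjacent (P i) Q \<longrightarrow>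
        \<not> prefers (P i) (f (P(i := Q))) (f P))"

definition tops_only :: "nat \<Rightarrow> 'a list set \<Rightarrow> ((nat \<Rightarrow> 'a list) \<Rightarrow> 'a) \<Rightarrow> bool" where
  "tops_only n D f \<longleftrightarrow>
     (\<forall>P\<in>profiles n D. \<forall>P'\<in>profiles n D. (\<forall>i<n. top (P i) = top (P' i)) \<longrightarrow> f P = f P')"

definition dictatorship :: "nat \<Rightarrow> 'a list set \<Rightarrow> ((nat \<Rightarrow> 'a list) \<Rightarrow> 'a) \<Rightarrow> bool" where
  "dictatorship n D f \<longleftrightarrow> (\<exists>i<n. \<forall>P\<in>profiles n D. f P = top (P i))"

end

theory Submission
  imports Defs
begin


definition prof :: "'a \<Rightarrow> 'a \<Rightarrow> nat set \<Rightarrow> nat \<Rightarrow> 'a" where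
  "prof a b T = (\<lambda>j. if j \<in> T then b else a)"

locale core =
  fixes A :: "'a set" and E :: "'a \<Rightarrow> 'a \<Rightarrow> bool" and n :: nat
    and g :: "(nat \<Rightarrow> 'a) \<Rightarrow> 'a"
  assumes finA: "finite A"
  and Ane: "A \<noteq> {}"
  and Esym: "E a b \<Longrightarrow> E b a"
  and Eirr: "E a b \<Longrightarrow> a \<noteq> b"
  and EA: "E a b \<Longrightarrow> a \<in> A"
  and deg2: "E a b \<Longrightarrow> \<exists>c. E b c \<and> c \<noteq> a"
  and hasnb: "a \<in> A \<Longrightarrow> \<exists>b. E a b"
  and conn: "a \<in> A \<Longrightarrow> b \<in> A \<Longrightarrow> E\<^sup>*\<^sup>* a b"
  and gcong: "(\<And>i. i < n \<Longrightarrow> x i = y i) \<Longrightarrow> g x = g y"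
  and gA: "(\<And>i. i < n \<Longrightarrow> x i \<in> A) \<Longrightarrow> g x \<in> A"
  and unan: "a \<in> A \<Longrightarrow> (\<And>i. i < n \<Longrightarrow> x i = a) \<Longrightarrow> g x = a"
  and edge: "(\<And>j. j < n \<Longrightarrow> x j \<in> A) \<Longrightarrow> i < n \<Longrightarrow> E (x i) b \<Longrightarrow>
              g (x(i:=b)) = g x \<or> (g x = x i \<and> g (x(i:=b)) = b)"
begin

lemma EB: "E a b \<Longrightarrow> b \<in> A" using EA Esym by blast

definition Ew :: "'a \<Rightarrow> 'a \<Rightarrow> 'a \<Rightarrow> bool" where
  "Ew w x y \<longleftrightarrow> E x y \<and> x \<noteq> w \<and> y \<noteq> w"

lemma stay:
  assumes "g x = w" "\<forall>j<n. x j \<in> A" "i < n" "x i \<noteq> w" "E (x i) b"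
  shows "g (x(i:=b)) = w"
  using edge[of x i b] assms by auto

lemma reloc1:
  assumes "(Ew w)\<^sup>*\<^sup>* u y" "g x = w" "\<forall>j<n. x j \<in> A" "i < n" "x i = u"
  shows "g (x(i:=y)) = w"
  using assms(1)
proof (induction rule: rtranclp_induct)
  case base
  then show ?case using assms by (metis fun_upd_triv)
next
  case (step y z)
  have yA: "y \<in> A" using step(2) EA unfolding Ew_def by blast
  have a1: "\<forall>j<n. (x(i:=y)) j \<in> A" using assms(3) yA by auto
  have a2: "(x(i:=y)) i \<noteq> w" "E ((x(i:=y)) i) z" using step(2) unfolding Ew_def by auto
  have "g ((x(i:=y))(i:=z)) = w"
    using stay[OF step.IH a1 assms(4) a2] .
  then have "g (x(i:=z)) = w" by simp
  then show ?case by (simp add: fun_upd_def)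
qed

lemma relocS:
  assumes "finite V" "V \<subseteq> {..<n}" "g x = w" "\<forall>j<n. x j \<in> A"
    "\<forall>j\<in>V. (Ew w)\<^sup>*\<^sup>* (x j) (y j) \<and> y j \<in> A"
  shows "g (\<lambda>j. if j \<in> V then y j else x j) = w"
  using assms
proof (induction V rule: finite_induct)
  case empty
  then show ?case by simp
next
  case (insert i F)
  define z where "z = (\<lambda>j. if j \<in> F then y j else x j)"
  have gz: "g z = w" using insert unfolding z_def by auto
  have zA: "\<forall>j<n. z j \<in> A" using insert unfolding z_def by auto
  have "g (z(i:=y i)) = w"
    by (rule reloc1[where u="x i"]) (use insert gz zA in \<open>auto simp: z_def\<close>)
  moreover have "z(i:=y i) = (\<lambda>j. if j \<in> insert i F then y j else x j)"
    unfolding z_def by auto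
  ultimately show ?case by simp
qed

lemma tow1_aux:
  assumes "E\<^sup>*\<^sup>* u w" "i < n"
  shows "\<forall>x. g x = w \<longrightarrow> (\<forall>j<n. x j \<in> A) \<longrightarrow> x i = u \<longrightarrow> g (x(i:=w)) = w"
  using assms(1)
proof (induction rule: converse_rtranclp_induct)
  case base
  then show ?case by (metis fun_upd_triv)
next
  case (step u v)
  show ?case
  proof (intro allI impI)
    fix x assume x: "g x = w" "\<forall>j<n. x j \<in> A" "x i = u"
    show "g (x(i:=w)) = w"
    proof (cases "u = w")
      case True
      then show ?thesis using x by (metis fun_upd_triv)
    next
      case False
      have vA: "v \<in> A" using step(1) EB by blast
      have "g (x(i:=v)) = w" using stay[of x w i v] step x assms(2) False by auto
      moreover have "\<forall>j<n. (x(i:=v)) j \<in> A" using x vA by auto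
      ultimately have "g ((x(i:=v))(i:=w)) = w"
        by (intro step.IH[rule_format]) auto
      then show ?thesis by simp
    qed
  qed
qed

lemma tow1:
  assumes "E\<^sup>*\<^sup>* u w" "g x = w" "\<forall>j<n. x j \<in> A" "i < n" "x i = u"
  shows "g (x(i:=w)) = w"
  using tow1_aux[OF assms(1) assms(4)] assms by blast

lemma towS:
  assumes "finite V" "V \<subseteq> {..<n}" "w \<in> A" "g x = w" "\<forall>j<n. x j \<in> A"
  shows "g (\<lambda>j. if j \<in> V then w else x j) = w"
  using assms
proof (induction V rule: finite_induct)
  case empty
  then show ?case by simp
next
  case (insert i F)
  define z where "z = (\<lambda>j. if j \<in> F then w else x j)"
  have gz: "g z = w" using insert unfolding z_def by auto
  have zA: "\<forall>j<n. z j \<in> A" using insert unfolding z_def by auto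
  have "g (z(i:=w)) = w"
    by (rule tow1[where u="z i"]) (use insert gz zA conn in auto)
  moreover have "z(i:=w) = (\<lambda>j. if j \<in> insert i F then w else x j)"
    unfolding z_def by auto
  ultimately show ?case by simp
qed

lemma lastedge:
  assumes "E\<^sup>*\<^sup>* u w" "u \<noteq> w"
  shows "\<exists>v. (Ew w)\<^sup>*\<^sup>* u v \<and> E v w"
  using assms
proof (induction rule: converse_rtranclp_induct)
  case base
  then show ?case by simp
next
  case (step u u')
  show ?case
  proof (cases "u' = w")
    case True
    then show ?thesis using step by auto
  next
    case False
    then obtain v where "(Ew w)\<^sup>*\<^sup>* u' v" "E v w" using step by auto
    moreover have "Ew w u u'" using step False unfolding Ew_def by auto
    ultimately show ?thesis by (meson converse_rtranclp_into_rtranclp)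
  qed
qed

lemma pairS:
  assumes "finite V" "V \<subseteq> {..<n}" "E a b" "\<forall>j<n. x j \<in> A" "\<forall>j\<in>V. x j = a"
    "g x \<in> {a,b}"
  shows "g (\<lambda>j. if j \<in> V then b else x j) \<in> {a,b}"
  using assms
proof (induction V rule: finite_induct)
  case empty
  then show ?case by simp
next
  case (insert i F)
  define z where "z = (\<lambda>j. if j \<in> F then b else x j)"
  have gz: "g z \<in> {a,b}" using insert unfolding z_def by auto
  have bA: "b \<in> A" using EB insert by blast
  have zA: "\<forall>j<n. z j \<in> A" using insert bA unfolding z_def by auto
  have zi: "z i = a" using insert unfolding z_def by auto
  have "g (z(i:=b)) \<in> {a,b}"
    using edge[of z i b] zA zi gz insert by auto
  moreover have "z(i:=b) = (\<lambda>j. if j \<in> insert i F then b else x j)"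
    unfolding z_def by auto
  ultimately show ?case by simp
qed


lemma prof_A: "a \<in> A \<Longrightarrow> b \<in> A \<Longrightarrow> \<forall>j<n. prof a b T j \<in> A"
  unfolding prof_def by auto

lemma prof_range:
  assumes "E a b" "T \<subseteq> {..<n}"
  shows "g (prof a b T) \<in> {a,b}"
proof -
  have aA: "a \<in> A" and bA: "b \<in> A" using assms EA EB by auto
  have fT: "finite T" using assms(2) finite_subset by blast
  have "g (\<lambda>j. if j \<in> T then b else (\<lambda>_. a) j) \<in> {a,b}"
    by (rule pairS) (use assms fT aA unan[of a "\<lambda>_. a"] in auto)
  then show ?thesis unfolding prof_def by simp
qed

lemma mono:
  assumes "E a b" "R \<subseteq> U" "U \<subseteq> {..<n}" "g (prof a b R) = b"
  shows "g (prof a b U) = b"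
proof -
  have aA: "a \<in> A" and bA: "b \<in> A" using assms EA EB by auto
  have fT: "finite (U - R)" using assms finite_subset by blast
  have "g (\<lambda>j. if j \<in> U - R then b else prof a b R j) = b"
    by (rule towS) (use assms fT aA bA prof_A in auto)
  moreover have "(\<lambda>j. if j \<in> U - R then b else prof a b R j) = prof a b U"
    using assms(2) unfolding prof_def by (auto intro!: ext)
  ultimately show ?thesis by simp
qed

lemma propag:
  assumes "E a b" "E b c" "a \<noteq> c" "T \<subseteq> {..<n}" "g (prof a b T) = a"
  shows "g (prof b c T) = b"
proof -
  have aA: "a \<in> A" and bA: "b \<in> A" and cA: "c \<in> A" using assms EA EB by auto
  have ab: "a \<noteq> b" using Eirr assms by auto
  have fT: "finite T" using assms(4) finite_subset by blast
  have "g (\<lambda>j. if j \<in> T then (\<lambda>_. c) j else prof a b T j) = a"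
    by (rule relocS) (use assms fT aA bA cA ab prof_A in \<open>auto simp: prof_def Ew_def\<close>)
  moreover have "(\<lambda>j. if j \<in> T then (\<lambda>_. c) j else prof a b T j) = prof a c T"
    unfolding prof_def by auto
  ultimately have g1: "g (prof a c T) = a" by simp
  have fN: "finite ({..<n} - T)" by simp
  have "g (\<lambda>j. if j \<in> {..<n} - T then b else prof a c T j) \<in> {a,b}"
    by (rule pairS) (use assms fN aA bA cA g1 prof_A in \<open>auto simp: prof_def\<close>)
  moreover have "g (\<lambda>j. if j \<in> {..<n} - T then b else prof a c T j) = g (prof b c T)"
    by (rule gcong) (auto simp: prof_def)
  ultimately have "g (prof b c T) \<in> {a,b}" by simp
  moreover have "g (prof b c T) \<in> {b,c}" using prof_range assms by blast
  ultimately show ?thesis using assms(3) ab by auto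
qed

lemma propag2:
  assumes "E a b" "E b c" "a \<noteq> c" "T \<subseteq> {..<n}" "g (prof b c T) = c"
  shows "g (prof a b T) = b"
proof -
  have "b \<noteq> c" using Eirr assms by auto
  then show ?thesis using propag[OF assms(1-4)] prof_range[OF assms(1,4)] assms(5) by auto
qed


lemma cyc_aux:
  assumes ab: "E a b" and bc: "E b c" and ac: "a \<noteq> c" and reach: "(Ew b)\<^sup>*\<^sup>* c a"
  shows "finite U \<Longrightarrow> U \<subseteq> {..<n} \<Longrightarrow> g (prof a b U) = b \<Longrightarrow> \<exists>d\<in>U. g (prof a b {d}) = b"
proof (induction U rule: finite_induct)
  have aA: "a \<in> A" and bA: "b \<in> A" and cA: "c \<in> A" using ab bc EA EB by auto
  have ab': "a \<noteq> b" and bc': "b \<noteq> c" using Eirr ab bc by auto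
  {
  case empty
  have "g (prof a b {}) = a" by (rule unan) (use aA in \<open>auto simp: prof_def\<close>)
  then show ?case using empty ab' by simp
  }
next
  case (insert i U)
  have aA: "a \<in> A" and bA: "b \<in> A" and cA: "c \<in> A" using ab bc EA EB by auto
  have ab': "a \<noteq> b" and bc': "b \<noteq> c" using Eirr ab bc by auto
  define p where "p = (\<lambda>j. if j = i then b else if j \<in> U then c else a)"
  have pA: "\<forall>j<n. p j \<in> A" using aA bA cA unfolding p_def by auto
  have fU: "finite U" using insert by simp
  have UN: "U \<subseteq> {..<n}" using insert by simp
  consider "g p = a" | "g p = c" | "g p = b" | "g p \<notin> {a,b,c}" by auto
  then show ?case
  proof cases
    case 1
    have "Ew a c b" using Esym[OF bc] ac ab' unfolding Ew_def by auto
    then have cb: "(Ew a)\<^sup>*\<^sup>* c b" by auto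
    have "g (\<lambda>j. if j \<in> U then (\<lambda>_. b) j else p j) = a"
      by (rule relocS) (use 1 fU UN pA bA cb in \<open>auto simp: p_def\<close>)
    moreover have "(\<lambda>j. if j \<in> U then (\<lambda>_. b) j else p j) = prof a b (insert i U)"
      unfolding p_def prof_def by (auto intro!: ext)
    ultimately show ?thesis using insert ab' by simp
  next
    case 2
    have "Ew c a b" using ab ac bc' unfolding Ew_def by auto
    then have ab2: "(Ew c)\<^sup>*\<^sup>* a b" by auto
    have "g (\<lambda>j. if j \<in> {..<n} - insert i U then (\<lambda>_. b) j else p j) = c"
      by (rule relocS) (use 2 pA bA ab2 insert in \<open>auto simp: p_def\<close>)
    moreover have "g (\<lambda>j. if j \<in> {..<n} - insert i U then (\<lambda>_. b) j else p j) = g (prof b c U)"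
      by (rule gcong) (use insert in \<open>auto simp: p_def prof_def\<close>)
    ultimately have "g (prof b c U) = c" by simp
    then have "g (prof a b U) = b" using propag2[OF ab bc ac UN] by simp
    then obtain d where "d \<in> U" "g (prof a b {d}) = b" using insert UN by blast
    then show ?thesis by auto
  next
    case 3
    have "g (\<lambda>j. if j \<in> U then (\<lambda>_. a) j else p j) = b"
      by (rule relocS) (use 3 fU UN pA aA reach insert(2) in \<open>auto simp: p_def\<close>)
    moreover have "(\<lambda>j. if j \<in> U then (\<lambda>_. a) j else p j) = prof a b {i}"
      using insert unfolding p_def prof_def by (auto intro!: ext)
    ultimately show ?thesis by auto
  next
    case 4
    have "g (\<lambda>j. if j \<in> {..<n} then (\<lambda>_. b) j else p j) = g p"
    proof (rule relocS)
      show "\<forall>j\<in>{..<n}. (Ew (g p))\<^sup>*\<^sup>* (p j) ((\<lambda>_. b) j) \<and> (\<lambda>_. b) j \<in> A"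
      proof
        fix j assume "j \<in> {..<n}"
        have "p j = b \<or> p j = a \<or> p j = c" unfolding p_def by auto
        moreover have "Ew (g p) a b" "Ew (g p) c b" using 4 ab Esym[OF bc] unfolding Ew_def by auto
        ultimately show "(Ew (g p))\<^sup>*\<^sup>* (p j) ((\<lambda>_. b) j) \<and> (\<lambda>_. b) j \<in> A"
          using bA by auto
      qed
    qed (use pA in auto)
    moreover have "g (\<lambda>j. if j \<in> {..<n} then (\<lambda>_. b) j else p j) = b"
      by (rule unan) (use bA in auto)
    ultimately show ?thesis using 4 by auto
  qed
qed

lemma cyc:
  assumes ab: "E a b" and bc: "E b c" and ac: "a \<noteq> c" and reach: "(Ew b)\<^sup>*\<^sup>* c a"
  shows "\<exists>d<n. g (prof a b {d}) = b"
proof -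
  have bA: "b \<in> A" using ab EB by auto
  have "g (prof a b {..<n}) = b" by (rule unan) (use bA in \<open>auto simp: prof_def\<close>)
  then obtain d where "d \<in> {..<n}" "g (prof a b {d}) = b"
    using cyc_aux[OF assms, of "{..<n}"] by auto
  then show ?thesis by auto
qed


lemma reach:
  "(\<forall>k. Suc k < length ys \<longrightarrow> E (ys!k) (ys!Suc k)) \<Longrightarrow> b \<notin> set ys \<Longrightarrow> u \<in> set ys \<Longrightarrow>
   (Ew b)\<^sup>*\<^sup>* u (hd ys)"
proof (induction ys arbitrary: u)
  case Nil
  then show ?case by simp
next
  case (Cons y ys)
  show ?case
  proof (cases "u = y")
    case True
    then show ?thesis by simp
  next
    case False
    then have u: "u \<in> set ys" using Cons by simp
    then have ne: "ys \<noteq> []" by auto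
    have ch: "\<forall>k. Suc k < length ys \<longrightarrow> E (ys!k) (ys!Suc k)"
    proof (intro allI impI)
      fix k assume "Suc k < length ys"
      then show "E (ys!k) (ys!Suc k)" using Cons(2)[rule_format, of "Suc k"] by simp
    qed
    have IH: "(Ew b)\<^sup>*\<^sup>* u (hd ys)" using Cons ch u by simp
    have "E y (ys!0)" using Cons(2)[rule_format, of 0] ne by simp
    then have "E (hd ys) y" using ne Esym by (simp add: hd_conv_nth)
    moreover have "hd ys \<noteq> b" "y \<noteq> b" using Cons(3) ne by auto
    ultimately have "Ew b (hd ys) y" unfolding Ew_def by auto
    then show ?thesis using IH by simp
  qed
qed

lemma path_aux:
  "\<forall>ps a b rest. card A - length ps = m \<longrightarrow> distinct ps \<longrightarrow> set ps \<subseteq> A \<longrightarrow>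
     (\<forall>k. Suc k < length ps \<longrightarrow> E (ps!k) (ps!Suc k)) \<longrightarrow> ps = b # a # rest \<longrightarrow>
     (\<exists>d<n. g (prof a b {d}) = b)"
proof (induction m rule: less_induct)
  case (less m)
  show ?case
  proof (intro allI impI)
    fix ps a b rest
    assume m: "card A - length ps = m" and dps: "distinct ps" and sA: "set ps \<subseteq> A"
      and ch: "\<forall>k. Suc k < length ps \<longrightarrow> E (ps!k) (ps!Suc k)" and ps: "ps = b # a # rest"
    have "E b a" using ch[rule_format, of 0] ps by simp
    then have ab: "E a b" using Esym by blast
    obtain c where bc: "E b c" and ca: "c \<noteq> a" using deg2[OF ab] by blast
    show "\<exists>d<n. g (prof a b {d}) = b"
    proof (cases "c \<in> set ps")
      case True
      have cb: "c \<noteq> b" using Eirr bc by auto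
      then have crest: "c \<in> set (a # rest)" using True ps ca by auto
      have ch2: "\<forall>k. Suc k < length (a # rest) \<longrightarrow> E ((a#rest)!k) ((a#rest)!Suc k)"
      proof (intro allI impI)
        fix k assume "Suc k < length (a # rest)"
        then show "E ((a#rest)!k) ((a#rest)!Suc k)" using ch[rule_format, of "Suc k"] ps by simp
      qed
      have "b \<notin> set (a # rest)" using dps ps by auto
      then have "(Ew b)\<^sup>*\<^sup>* c (hd (a # rest))" using reach[OF ch2 _ crest] by blast
      then have "(Ew b)\<^sup>*\<^sup>* c a" by simp
      then show ?thesis using cyc[OF ab bc ca[symmetric]] by blast
    next
      case False
      define ps' where "ps' = c # ps"
      have cA: "c \<in> A" using bc EB by auto
      have d': "distinct ps'" using dps False unfolding ps'_def by auto
      have s': "set ps' \<subseteq> A" using sA cA unfolding ps'_def by auto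
      have "length ps' = card (set ps')" using d' by (simp add: distinct_card)
      also have "\<dots> \<le> card A" using s' finA card_mono by blast
      finally have "length ps' \<le> card A" .
      then have lt: "card A - length ps' < m" using m unfolding ps'_def by auto
      have ch': "\<forall>k. Suc k < length ps' \<longrightarrow> E (ps'!k) (ps'!Suc k)"
      proof (intro allI impI)
        fix k assume k: "Suc k < length ps'"
        show "E (ps'!k) (ps'!Suc k)"
        proof (cases k)
          case 0
          then show ?thesis using Esym[OF bc] ps unfolding ps'_def by simp
        next
          case (Suc k')
          then show ?thesis using ch[rule_format, of k'] k unfolding ps'_def by simp
        qed
      qed
      have pe: "ps' = c # b # (a # rest)" using ps unfolding ps'_def by simp
      have "\<exists>d<n. g (prof b c {d}) = c"
        using less.IH[OF lt] d' s' ch' pe by blast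
      then obtain d where d: "d < n" "g (prof b c {d}) = c" by blast
      have "g (prof a b {d}) = b" using propag2[OF ab bc ca[symmetric]] d by auto
      then show ?thesis using d by blast
    qed
  qed
qed

lemma edgeQ:
  assumes uv: "E u v"
  shows "\<exists>d<n. g (prof u v {d}) = v"
proof -
  have ne: "u \<noteq> v" using Eirr uv by blast
  have "distinct [v,u]" using ne by simp
  moreover have "set [v,u] \<subseteq> A" using EA EB uv by auto
  moreover have "\<forall>k. Suc k < length [v,u] \<longrightarrow> E ([v,u]!k) ([v,u]!Suc k)"
  proof (intro allI impI)
    fix k assume "Suc k < length [v,u]"
    then have "k = 0" by simp
    then show "E ([v,u]!k) ([v,u]!Suc k)" using Esym[OF uv] by simp
  qed
  ultimately show ?thesis using path_aux[of "card A - length [v,u]"] by blast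
qed

definition Dct :: "'a \<Rightarrow> 'a \<Rightarrow> nat \<Rightarrow> bool" where
  "Dct u v d \<longleftrightarrow> d < n \<and> (\<forall>T \<subseteq> {..<n}. (g (prof u v T) = v \<longleftrightarrow> d \<in> T))"

lemma dual: "T \<subseteq> {..<n} \<Longrightarrow> g (prof v u T) = g (prof u v ({..<n} - T))"
  by (rule gcong) (auto simp: prof_def)

lemma dict_edge:
  assumes uv: "E u v"
  shows "\<exists>d. Dct u v d"
proof -
  have vu: "E v u" using Esym uv by blast
  have ne: "u \<noteq> v" using Eirr uv by blast
  obtain d1 where d1: "d1 < n" "g (prof u v {d1}) = v" using edgeQ[OF uv] by blast
  obtain d2 where d2: "d2 < n" "g (prof v u {d2}) = u" using edgeQ[OF vu] by blast
  have eq: "d1 = d2"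
  proof (rule ccontr)
    assume dd: "d1 \<noteq> d2"
    have s1: "{d1} \<subseteq> {..<n} - {d2}" using dd d1 by simp
    have s2: "{..<n} - {d2} \<subseteq> {..<n}" by simp
    have A1: "g (prof u v ({..<n} - {d2})) = v" using mono[OF uv s1 s2 d1(2)] .
    have s3: "{d2} \<subseteq> {..<n}" using d2 by simp
    have A2: "g (prof v u {d2}) = g (prof u v ({..<n} - {d2}))" using dual[OF s3] .
    show False using A1 A2 d2(2) ne by simp
  qed
  have "Dct u v d1" unfolding Dct_def
  proof (intro conjI allI impI)
    show "d1 < n" by fact
    fix T assume T: "T \<subseteq> {..<n}"
    show "g (prof u v T) = v \<longleftrightarrow> d1 \<in> T"
    proof
      assume "d1 \<in> T"
      then have s1: "{d1} \<subseteq> T" by simp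
      show "g (prof u v T) = v" using mono[OF uv s1 T d1(2)] .
    next
      assume gv: "g (prof u v T) = v"
      show "d1 \<in> T"
      proof (rule ccontr)
        assume "d1 \<notin> T"
        then have s1: "{d2} \<subseteq> {..<n} - T" using eq d1 by simp
        have s2: "{..<n} - T \<subseteq> {..<n}" by simp
        have B1: "g (prof v u ({..<n} - T)) = u" using mono[OF vu s1 s2 d2(2)] .
        have B2: "g (prof v u ({..<n} - T)) = g (prof u v ({..<n} - ({..<n} - T)))"
          using dual[OF s2] .
        have "{..<n} - ({..<n} - T) = T" using T by blast
        then show False using B1 B2 gv ne by simp
      qed
    qed
  qed
  then show ?thesis by blast
qed

lemma Dct_uniq: "Dct u v d \<Longrightarrow> Dct u v d' \<Longrightarrow> d = d'"
proof -
  assume a: "Dct u v d" and b: "Dct u v d'"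
  have dn: "d < n" using a unfolding Dct_def by simp
  then have s: "{d} \<subseteq> {..<n}" by simp
  have "g (prof u v {d}) = v" using a s unfolding Dct_def by blast
  then have "d' \<in> {d}" using b s unfolding Dct_def by blast
  then show ?thesis by simp
qed

lemma Dct_adj:
  assumes ab: "E a b" and bc: "E b c" and d: "Dct a b d" and d': "Dct b c d'"
  shows "d = d'"
proof (cases "a = c")
  case True
  have dn: "d < n" "d' < n" using d d' unfolding Dct_def by auto
  have ne: "a \<noteq> b" using Eirr ab by blast
  have s1: "{..<n} - {d} \<subseteq> {..<n}" by simp
  have s3: "{d} \<subseteq> {..<n}" using dn by simp
  have "d \<notin> {..<n} - {d}" by simp
  then have "g (prof a b ({..<n} - {d})) \<noteq> b" using d s1 unfolding Dct_def by blast
  moreover have "g (prof a b ({..<n} - {d})) \<in> {a,b}" using prof_range[OF ab s1] .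
  moreover have "g (prof b a {d}) = g (prof a b ({..<n} - {d}))" using dual[OF s3] .
  ultimately have "g (prof b a {d}) = a" by auto
  then have "g (prof b c {d}) = c" using True by simp
  then have "d' \<in> {d}" using d' s3 unfolding Dct_def by blast
  then show ?thesis by simp
next
  case False
  have dn: "d < n" "d' < n" using d d' unfolding Dct_def by auto
  have s3: "{d'} \<subseteq> {..<n}" using dn by simp
  have "g (prof b c {d'}) = c" using d' s3 unfolding Dct_def by blast
  then have "g (prof a b {d'}) = b" using propag2[OF ab bc False s3] by blast
  then have "d \<in> {d'}" using d s3 unfolding Dct_def by blast
  then show ?thesis by simp
qed

lemma global: "\<exists>d<n. \<forall>w v. E w v \<longrightarrow> g (prof w v {d}) = v"
proof -
  obtain a where aA: "a \<in> A" using Ane by blast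
  obtain b where ab: "E a b" using hasnb[OF aA] by blast
  obtain d0 where d0: "Dct a b d0" using dict_edge[OF ab] by blast
  have claim: "E\<^sup>*\<^sup>* b w \<Longrightarrow> \<forall>v. E w v \<longrightarrow> Dct w v d0" for w
  proof (induction rule: rtranclp_induct)
    case base
    show ?case
    proof (intro allI impI)
      fix v assume bv: "E b v"
      obtain d where d: "Dct b v d" using dict_edge[OF bv] by blast
      have "d0 = d" using Dct_adj[OF ab bv d0 d] .
      then show "Dct b v d0" using d by simp
    qed
  next
    case (step w w')
    show ?case
    proof (intro allI impI)
      fix v assume wv: "E w' v"
      obtain d where d: "Dct w' v d" using dict_edge[OF wv] by blast
      have "Dct w w' d0" using step by blast
      then have "d0 = d" using Dct_adj[OF step(2) wv _ d] by blast
      then show "Dct w' v d0" using d by simp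
    qed
  qed
  have "\<forall>w v. E w v \<longrightarrow> g (prof w v {d0}) = v"
  proof (intro allI impI)
    fix w v assume wv: "E w v"
    have "b \<in> A" "w \<in> A" using ab wv EA EB by auto
    then have "E\<^sup>*\<^sup>* b w" using conn by blast
    then have "Dct w v d0" using claim wv by blast
    then show "g (prof w v {d0}) = v" unfolding Dct_def by auto
  qed
  moreover have "d0 < n" using d0 unfolding Dct_def by auto
  ultimately show ?thesis by blast
qed

theorem final: "\<exists>d<n. \<forall>x. (\<forall>j<n. x j \<in> A) \<longrightarrow> g x = x d"
proof -
  obtain d where dn: "d < n" and gd: "\<forall>w v. E w v \<longrightarrow> g (prof w v {d}) = v" using global by blast
  have "g x = x d" if xA: "\<forall>j<n. x j \<in> A" for x
  proof (rule ccontr)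
    assume ne: "g x \<noteq> x d"
    obtain w where w: "w = g x" by blast
    have wA: "w \<in> A" using gA xA w by auto
    define x1 where "x1 = (\<lambda>j. if j \<in> {..<n} - {d} then w else x j)"
    have fin: "finite ({..<n} - {d})" by simp
    have sub: "{..<n} - {d} \<subseteq> {..<n}" by simp
    have g1: "g x1 = w" unfolding x1_def using towS[OF fin sub wA w[symmetric] xA] .
    have x1A: "\<forall>j<n. x1 j \<in> A" using xA wA unfolding x1_def by auto
    have x1d: "x1 d = x d" unfolding x1_def by simp
    have xdA: "x d \<in> A" using xA dn by blast
    have "E\<^sup>*\<^sup>* (x d) w" using conn[OF xdA wA] .
    moreover have "x d \<noteq> w" using ne w by simp
    ultimately obtain v where v: "(Ew w)\<^sup>*\<^sup>* (x d) v" "E v w"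
      using lastedge by blast
    have "g (x1(d:=v)) = w" by (rule reloc1[OF v(1) g1 x1A dn x1d])
    moreover have "g (x1(d:=v)) = g (prof w v {d})" by (rule gcong) (simp add: x1_def prof_def)
    moreover have "g (prof w v {d}) = v" using gd Esym[OF v(2)] by blast
    moreover have "v \<noteq> w" using Eirr[OF v(2)] .
    ultimately show False by simp
  qed
  then show ?thesis using dn by blast
qed

end



lemma prefers_Cons: "prefers (x # L) y z \<longleftrightarrow> (y = x \<and> z \<in> set L) \<or> prefers L y z"
proof
  assume "prefers (x # L) y z"
  then obtain i j where ij: "i < j" "j < length (x#L)" "(x#L)!i = y" "(x#L)!j = z"
    unfolding prefers_def by blast
  obtain j' where j': "j = Suc j'" using ij by (cases j) auto
  have z: "z = L!j'" "j' < length L" using ij j' by auto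
  show "(y = x \<and> z \<in> set L) \<or> prefers L y z"
  proof (cases i)
    case 0
    then show ?thesis using ij z by auto
  next
    case (Suc i')
    then have "prefers L y z" unfolding prefers_def using ij j' z by (intro exI[of _ i'] exI[of _ j']) auto
    then show ?thesis by blast
  qed
next
  assume "(y = x \<and> z \<in> set L) \<or> prefers L y z"
  then show "prefers (x # L) y z"
  proof
    assume a: "y = x \<and> z \<in> set L"
    then obtain k where "k < length L" "L!k = z" by (auto simp: in_set_conv_nth)
    then show ?thesis unfolding prefers_def using a by (intro exI[of _ 0] exI[of _ "Suc k"]) auto
  next
    assume "prefers L y z"
    then obtain i j where ij: "i < j" "j < length L" "L!i = y" "L!j = z"
      unfolding prefers_def by blast
    then show ?thesis unfolding prefers_def by (intro exI[of _ "Suc i"] exI[of _ "Suc j"]) auto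
  qed
qed

lemma prefers_set: "prefers L y z \<Longrightarrow> y \<in> set L \<and> z \<in> set L"
  unfolding prefers_def by auto

lemma prefers_asym: "distinct L \<Longrightarrow> prefers L y z \<Longrightarrow> \<not> prefers L z y"
proof
  assume d: "distinct L" and p: "prefers L y z" and q: "prefers L z y"
  obtain i j where ij: "i < j" "j < length L" "L!i = y" "L!j = z" using p unfolding prefers_def by blast
  obtain i' j' where ij': "i' < j'" "j' < length L" "L!i' = z" "L!j' = y" using q unfolding prefers_def by blast
  have "i = j'" using d ij ij' nth_eq_iff_index_eq by (metis order.strict_trans)
  moreover have "j = i'" using d ij ij' nth_eq_iff_index_eq by (metis order.strict_trans)
  ultimately show False using ij ij' by simp
qed

lemma prefers_total:
  assumes "distinct L" "y \<in> set L" "z \<in> set L" "y \<noteq> z"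
  shows "prefers L y z \<or> prefers L z y"
proof -
  obtain i where i: "i < length L" "L!i = y" using assms by (auto simp: in_set_conv_nth)
  obtain j where j: "j < length L" "L!j = z" using assms by (auto simp: in_set_conv_nth)
  have "i \<noteq> j" using i j assms by auto
  then show ?thesis unfolding prefers_def using i j
    by (cases "i < j") (blast, metis linorder_neqE_nat)
qed

lemma swap_outcome:
  assumes d: "distinct (u#v#rest)" and o1: "o1 \<in> set (u#v#rest)" and o2: "o2 \<in> set (u#v#rest)"
    and n1: "\<not> prefers (u#v#rest) o2 o1" and n2: "\<not> prefers (v#u#rest) o1 o2"
  shows "o1 = o2 \<or> (o1 = u \<and> o2 = v)"
proof (rule ccontr)
  assume c: "\<not> (o1 = o2 \<or> (o1 = u \<and> o2 = v))"
  have d': "distinct (v#u#rest)" using d by auto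
  have "prefers (u#v#rest) o1 o2" using prefers_total[OF d o1 o2] c n1 by blast
  moreover have "prefers (v#u#rest) o2 o1" using prefers_total[OF d' _ _, of o2 o1] o1 o2 c n2 by auto
  ultimately show False
    using c d prefers_asym[of rest o1 o2] prefers_set[of rest] unfolding prefers_Cons by auto
qed

lemma adj_top:
  assumes "adjacent L L'" "top L \<noteq> top L'"
  shows "\<exists>u v rest. L = u#v#rest \<and> L' = v#u#rest"
proof -
  obtain k where k: "Suc k < length L" "L' = L[k := L!Suc k, Suc k := L!k]"
    using assms(1) unfolding adjacent_def by blast
  show ?thesis
  proof (cases k)
    case 0
    obtain u L1 where L1: "L = u # L1" using k by (cases L) auto
    obtain v rest where L2: "L1 = v # rest" using k L1 by (cases L1) auto
    show ?thesis using k 0 L1 L2 by simp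
  next
    case (Suc k')
    have ne: "L \<noteq> []" "L' \<noteq> []" using k by auto
    have "L'!0 = L!0" using k Suc by simp
    then have "top L' = top L" unfolding top_def using ne by (simp add: hd_conv_nth)
    then show ?thesis using assms(2) by simp
  qed
qed

lemma adj_swap: "adjacent (v#u#rest) (u#v#rest)"
  unfolding adjacent_def by (intro exI[of _ 0]) simp

lemma tc_top: "top_connected D L Q \<Longrightarrow> top Q = top L"
  unfolding top_connected_def is_path_def by (metis last_in_set)

lemma tc_ext:
  assumes tc: "top_connected D L R'" and Q: "Q \<in> D" and adj: "adjacent R' Q" and tq: "top Q = top L"
  shows "top_connected D L Q"
proof -
  obtain ps where ps: "is_path D ps" "hd ps = L" "last ps = R'" "\<forall>Q\<in>set ps. top Q = top L"
    using tc unfolding top_connected_def by blast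
  have LD: "L \<in> D" using tc unfolding top_connected_def by blast
  have ne: "ps \<noteq> []" and dps: "distinct ps" and sD: "set ps \<subseteq> D"
    and ch: "\<forall>k. Suc k < length ps \<longrightarrow> adjacent (ps!k) (ps!Suc k)"
    using ps(1) unfolding is_path_def by auto
  show ?thesis
  proof (cases "Q \<in> set ps")
    case True
    then obtain j where j: "j < length ps" "ps!j = Q" by (auto simp: in_set_conv_nth)
    define ps' where "ps' = take (Suc j) ps"
    have len: "length ps' = Suc j" using j unfolding ps'_def by simp
    have "is_path D ps'"
      unfolding is_path_def
    proof (intro conjI allI impI)
      show "ps' \<noteq> []" using len by auto
      show "distinct ps'" using dps unfolding ps'_def by simp
      show "set ps' \<subseteq> D" using sD set_take_subset unfolding ps'_def by fast
      fix k assume "Suc k < length ps'"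
      then show "adjacent (ps'!k) (ps'!Suc k)" using ch len j unfolding ps'_def by simp
    qed
    moreover have "hd ps' = L" using ps(2) ne unfolding ps'_def by simp
    moreover have "last ps' = Q"
    proof -
      have "ps' ! j = Q" using j unfolding ps'_def by simp
      moreover have "ps' \<noteq> []" using len by auto
      ultimately show ?thesis using len by (simp add: last_conv_nth)
    qed
    moreover have "\<forall>Q\<in>set ps'. top Q = top L" using ps(4) set_take_subset unfolding ps'_def by fast
    ultimately show ?thesis using LD Q unfolding top_connected_def by blast
  next
    case False
    define ps' where "ps' = ps @ [Q]"
    have "is_path D ps'"
      unfolding is_path_def
    proof (intro conjI allI impI)
      show "ps' \<noteq> []" unfolding ps'_def by simp
      show "distinct ps'" using dps False unfolding ps'_def by simp
      show "set ps' \<subseteq> D" using sD Q unfolding ps'_def by simp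
      fix k assume k: "Suc k < length ps'"
      show "adjacent (ps'!k) (ps'!Suc k)"
      proof (cases "Suc k < length ps")
        case True
        then show ?thesis using ch unfolding ps'_def by (simp add: nth_append)
      next
        case False
        then have kk: "Suc k = length ps" using k unfolding ps'_def by simp
        then have "k = length ps - 1" by simp
        then have "ps!k = R'" using ps(3) ne by (simp add: last_conv_nth)
        then show ?thesis using kk adj unfolding ps'_def by (simp add: nth_append)
      qed
    qed
    moreover have "hd ps' = L" using ps(2) ne unfolding ps'_def by simp
    moreover have "last ps' = Q" unfolding ps'_def by simp
    moreover have "\<forall>Q'\<in>set ps'. top Q' = top L" using ps(4) tq unfolding ps'_def by simp
    ultimately show ?thesis using LD Q unfolding top_connected_def by blast
  qed
qed

lemma TCC_tc: "L \<in> D \<Longrightarrow> R' \<in> TCC D L \<Longrightarrow> top_connected D L R'"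
proof -
  assume L: "L \<in> D" and R: "R' \<in> TCC D L"
  show ?thesis
  proof (cases "R' = L")
    case True
    have "is_path D [L]" using L unfolding is_path_def by simp
    then show ?thesis using True L unfolding top_connected_def by (intro conjI exI[of _ "[L]"]) auto
  next
    case False
    then show ?thesis using R unfolding TCC_def by auto
  qed
qed

lemma nb_edge:
  assumes L: "L \<in> D" and nb: "neighbour D (TCC D L) Q"
  shows "\<exists>R'\<in>D. adjacent R' Q \<and> top R' = top L \<and> top Q \<noteq> top L \<and> Q \<in> D"
proof -
  obtain R' where Q: "Q \<in> D" "Q \<notin> TCC D L" and R': "R' \<in> TCC D L" "adjacent R' Q"
    using nb unfolding neighbour_def by blast
  have tc: "top_connected D L R'" using TCC_tc[OF L R'(1)] .
  have RD: "R' \<in> D" using tc unfolding top_connected_def by blast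
  have tr: "top R' = top L" using tc_top[OF tc] .
  have "top Q \<noteq> top L"
  proof
    assume "top Q = top L"
    then have "top_connected D L Q" using tc_ext[OF tc Q(1) R'(2)] by blast
    then show False using Q unfolding TCC_def by auto
  qed
  then show ?thesis using RD R'(2) tr Q by blast
qed

definition topE :: "'a list set \<Rightarrow> 'a \<Rightarrow> 'a \<Rightarrow> bool" where
  "topE D a b \<longleftrightarrow> (\<exists>L\<in>D. \<exists>L'\<in>D. adjacent L L' \<and> top L = a \<and> top L' = b \<and> a \<noteq> b)"

lemma path_conn:
  "set ps \<subseteq> D \<Longrightarrow> ps \<noteq> [] \<Longrightarrow> (\<forall>k. Suc k < length ps \<longrightarrow> adjacent (ps!k) (ps!Suc k)) \<Longrightarrow>
   (topE D)\<^sup>*\<^sup>* (top (hd ps)) (top (last ps))"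
proof (induction ps)
  case Nil
  then show ?case by simp
next
  case (Cons x ps)
  show ?case
  proof (cases "ps = []")
    case True
    then show ?thesis by simp
  next
    case False
    have ch: "\<forall>k. Suc k < length ps \<longrightarrow> adjacent (ps!k) (ps!Suc k)"
    proof (intro allI impI)
      fix k assume "Suc k < length ps"
      then show "adjacent (ps!k) (ps!Suc k)" using Cons(4)[rule_format, of "Suc k"] by simp
    qed
    have IH: "(topE D)\<^sup>*\<^sup>* (top (hd ps)) (top (last ps))" using Cons False ch by simp
    have adj: "adjacent x (hd ps)" using Cons(4)[rule_format, of 0] False by (simp add: hd_conv_nth)
    have "x \<in> D" "hd ps \<in> D" using Cons(2) False by auto
    then have "top x = top (hd ps) \<or> topE D (top x) (top (hd ps))"
      using adj unfolding topE_def by blast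
    then show ?thesis using IH False
      by (metis converse_rtranclp_into_rtranclp hd_Cons_tl last_ConsR list.sel(1))
  qed
qed


theorem proposition1:
  fixes A :: "'a set" and D :: "'a list set" and n :: nat
    and f :: "(nat \<Rightarrow> 'a list) \<Rightarrow> 'a"
  assumes "finite A" and "card A \<ge> 3" and "n \<ge> 2"
    and "\<forall>L\<in>D. linord A L"
    and "minimally_rich A D"
    and "connected_two_neighbours D"
    and "\<forall>P\<in>profiles n D. f P \<in> A"
    and "unanimous n D f" and "tops_only n D f" and "locally_sp n D f"
  shows "dictatorship n D f"
proof -
  note finA = assms(1)
  have Ane: "A \<noteq> {}" using assms(2) by auto
  have lin: "\<And>L. L \<in> D \<Longrightarrow> distinct L \<and> set L = A" using assms(4) unfolding linord_def by blast
  have topA: "\<And>L. L \<in> D \<Longrightarrow> top L \<in> A"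
  proof -
    fix L assume "L \<in> D"
    then have "set L = A" using lin by blast
    then have "L \<noteq> []" using Ane by auto
    then show "top L \<in> A" using \<open>set L = A\<close> unfolding top_def by (metis list.set_sel(1))
  qed
  define R where "R = (\<lambda>a. SOME L. L \<in> D \<and> top L = a)"
  have R: "\<And>a. a \<in> A \<Longrightarrow> R a \<in> D \<and> top (R a) = a"
  proof -
    fix a assume "a \<in> A"
    then have "\<exists>L. L \<in> D \<and> top L = a" using assms(5) unfolding minimally_rich_def by blast
    then show "R a \<in> D \<and> top (R a) = a" unfolding R_def by (rule someI_ex)
  qed
  define g where "g = (\<lambda>x. f (\<lambda>i. if i < n then R (x i) else undefined))"
  have inprof: "\<And>x. (\<And>i. i < n \<Longrightarrow> x i \<in> A) \<Longrightarrow> (\<lambda>i. if i < n then R (x i) else undefined) \<in> profiles n D"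
    unfolding profiles_def using R by (auto simp: PiE_def extensional_def Pi_def)
  have tops_only: "\<And>P P'. P \<in> profiles n D \<Longrightarrow> P' \<in> profiles n D \<Longrightarrow> (\<And>i. i < n \<Longrightarrow> top (P i) = top (P' i)) \<Longrightarrow> f P = f P'"
    using assms(9) unfolding tops_only_def by blast
  have profD: "\<And>P i. P \<in> profiles n D \<Longrightarrow> i < n \<Longrightarrow> P i \<in> D"
    unfolding profiles_def by auto
  have nbs: "\<And>b. b \<in> A \<Longrightarrow> \<exists>c1 c2. topE D b c1 \<and> topE D b c2 \<and> c1 \<noteq> c2"
  proof -
    fix b assume bA: "b \<in> A"
    have RD: "R b \<in> D" and Rt: "top (R b) = b" using R[OF bA] by auto
    obtain Q1 Q2 where Q: "neighbour D (TCC D (R b)) Q1" "neighbour D (TCC D (R b)) Q2" "top Q1 \<noteq> top Q2"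
      using assms(6) RD unfolding connected_two_neighbours_def by blast
    have "topE D b (top Q1)"
    proof -
      obtain R' where "R' \<in> D" "adjacent R' Q1" "top R' = b" "top Q1 \<noteq> b" "Q1 \<in> D"
        using nb_edge[OF RD Q(1)] Rt by auto
      then show ?thesis unfolding topE_def by (intro bexI[of _ R'] bexI[of _ Q1]) auto
    qed
    moreover have "topE D b (top Q2)"
    proof -
      obtain R' where "R' \<in> D" "adjacent R' Q2" "top R' = b" "top Q2 \<noteq> b" "Q2 \<in> D"
        using nb_edge[OF RD Q(2)] Rt by auto
      then show ?thesis unfolding topE_def by (intro bexI[of _ R'] bexI[of _ Q2]) auto
    qed
    ultimately show "\<exists>c1 c2. topE D b c1 \<and> topE D b c2 \<and> c1 \<noteq> c2" using Q(3) by blast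
  qed
  have C: "core A (topE D) n g"
  proof (unfold_locales)
    show "finite A" by fact
    show "A \<noteq> {}" by fact
    show "topE D b a" if ab: "topE D a b" for a b
    proof -
      obtain L L' where LL: "L \<in> D" "L' \<in> D" "adjacent L L'" "top L = a" "top L' = b" "a \<noteq> b"
        using ab unfolding topE_def by blast
      obtain u v rest where uv: "L = u#v#rest" "L' = v#u#rest" using adj_top[OF LL(3)] LL by auto
      have "adjacent L' L" using uv adj_swap by simp
      then show ?thesis using LL unfolding topE_def by (intro bexI[of _ L'] bexI[of _ L]) auto
    qed
    show "a \<noteq> b" if "topE D a b" for a b using that unfolding topE_def by blast
    show "a \<in> A" if "topE D a b" for a b using that topA unfolding topE_def by blast
    show "\<exists>c. topE D b c \<and> c \<noteq> a" if "topE D a b" for a b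
    proof -
      have "b \<in> A" using that topA unfolding topE_def by blast
      then show ?thesis using nbs by blast
    qed
    show "\<exists>b. topE D a b" if "a \<in> A" for a using nbs[OF that] by blast
    show "(topE D)\<^sup>*\<^sup>* a b" if ab: "a \<in> A" "b \<in> A" for a b
    proof -
      have "R a \<in> D" "R b \<in> D" using R ab by auto
      then obtain ps where ps: "is_path D ps" "hd ps = R a" "last ps = R b"
        using assms(6) unfolding connected_two_neighbours_def dom_connected_def by blast
      have "(topE D)\<^sup>*\<^sup>* (top (hd ps)) (top (last ps))"
        using path_conn[of ps D] ps(1) unfolding is_path_def by blast
      then show ?thesis using ps R ab by simp
    qed
    show "g x = g y" if "\<And>i. i < n \<Longrightarrow> x i = y i" for x y
    proof -
      have "(\<lambda>i. if i < n then R (x i) else undefined) = (\<lambda>i. if i < n then R (y i) else undefined)"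
        using that by auto
      then show ?thesis unfolding g_def by simp
    qed
    show "g x \<in> A" if xa: "\<And>i. i < n \<Longrightarrow> x i \<in> A" for x
    proof -
      have "(\<lambda>i. if i < n then R (x i) else undefined) \<in> profiles n D" using inprof[of x] xa by blast
      then show ?thesis using assms(7) unfolding g_def by blast
    qed
    show "g x = a" if ua: "a \<in> A" "\<And>i. i < n \<Longrightarrow> x i = a" for a x
    proof -
      have un: "\<And>P a. P \<in> profiles n D \<Longrightarrow> (\<And>i. i < n \<Longrightarrow> top (P i) = a) \<Longrightarrow> f P = a"
        using assms(8) unfolding unanimous_def by blast
      have pr: "(\<lambda>i. if i < n then R (x i) else undefined) \<in> profiles n D" using inprof[of x] ua R by auto
      show ?thesis unfolding g_def by (rule un[OF pr]) (use R ua in auto)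
    qed
    show "g (x(i:=b)) = g x \<or> (g x = x i \<and> g (x(i:=b)) = b)"
      if xA: "\<And>j. j < n \<Longrightarrow> x j \<in> A" and i: "i < n" and e: "topE D (x i) b" for x i b
    proof -
      obtain L L' where LL: "L \<in> D" "L' \<in> D" "adjacent L L'" "top L = x i" "top L' = b" "x i \<noteq> b"
        using e unfolding topE_def by blast
      obtain u v rest where uv: "L = u#v#rest" "L' = v#u#rest" using adj_top[OF LL(3)] LL by auto
      have u: "u = x i" and v: "v = b" using LL uv unfolding top_def by auto
      have bA: "b \<in> A" using topA LL by blast
      define P where "P = (\<lambda>j. if j < n then (if j = i then L else R (x j)) else undefined)"
      define P' where "P' = P(i := L')"
      have PP: "P \<in> profiles n D" unfolding profiles_def P_def using R xA LL
        by (auto simp: PiE_def extensional_def Pi_def)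
      have PP': "P' \<in> profiles n D" unfolding profiles_def P'_def P_def using R xA LL i
        by (auto simp: PiE_def extensional_def Pi_def)
      have xbA: "\<And>j. j < n \<Longrightarrow> (x(i:=b)) j \<in> A" using xA bA by auto
      have fP: "f P = g x" unfolding g_def
        by (rule tops_only[OF PP inprof[OF xA]]) (use R xA LL in \<open>auto simp: P_def\<close>)
      have fP': "f P' = g (x(i:=b))" unfolding g_def
        by (rule tops_only[OF PP' inprof[OF xbA]]) (use R xA LL bA i in \<open>auto simp: P'_def P_def\<close>)
      have Pi: "P i = L" using i unfolding P_def by simp
      have P'i: "P' i = L'" unfolding P'_def by simp
      have lsp: "\<And>P i Q. P \<in> profiles n D \<Longrightarrow> i < n \<Longrightarrow> Q \<in> D \<Longrightarrow> adjacent (P i) Q \<Longrightarrow>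
          \<not> prefers (P i) (f (P(i := Q))) (f P)"
        using assms(10) unfolding locally_sp_def by blast
      have "\<not> prefers (P i) (f (P(i := L'))) (f P)" using lsp[OF PP i LL(2)] LL(3) Pi by simp
      then have n1: "\<not> prefers L (f P') (f P)" using Pi unfolding P'_def by simp
      have bk: "P'(i := L) = P" using Pi unfolding P'_def by auto
      have adj2: "adjacent L' L" using uv adj_swap by simp
      have "\<not> prefers (P' i) (f (P'(i := L))) (f P')" using lsp[OF PP' i LL(1)] adj2 P'i by simp
      then have n2: "\<not> prefers L' (f P) (f P')" using P'i bk by simp
      have "f P \<in> A" "f P' \<in> A" using assms(7) PP PP' by auto
      moreover have "set L = A" "distinct L" using lin LL by auto
      ultimately have "f P = f P' \<or> (f P = u \<and> f P' = v)"
        using swap_outcome[of u v rest "f P" "f P'"] n1 n2 uv by auto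
      then show ?thesis using fP fP' u v by auto
    qed
  qed
  obtain d where d: "d < n" "\<forall>x. (\<forall>j<n. x j \<in> A) \<longrightarrow> g x = x d"
    using core.final[OF C] by blast
  have "\<forall>P\<in>profiles n D. f P = top (P d)"
  proof
    fix P assume P: "P \<in> profiles n D"
    define x where "x = (\<lambda>j. top (P j))"
    have xA: "\<And>j. j < n \<Longrightarrow> x j \<in> A" using profD[OF P] topA unfolding x_def by blast
    have "g x = x d" using d xA by blast
    moreover have "g x = f P" unfolding g_def
      by (rule tops_only[OF inprof[OF xA] P]) (use R xA in \<open>auto simp: x_def\<close>)
    ultimately show "f P = top (P d)" unfolding x_def by simp
  qed
  then show ?thesis unfolding dictatorship_def using d by blast
qed

end
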